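(* Let $q$ be a prime power and $n,k,\delta,\alpha$ positive integers with $k\le n$, $3\le\alpha\le\left[{k\atop 1}\right]_q$ and $\delta\ge(\alpha-1)(k-1)+1$. Then $$B_q(n,k,\delta;\alpha)\le(\alpha-1)\frac{\left[{n\atop 1}\right]_q}{\left[{k\atop 1}\right]_q+1}.$$
   Context: For a prime power $q$, $\mathcal{G}_q(n,k)$ denotes the set of all $k$-dimensional subspaces of $\mathbb{F}_q^n$, and the Gaussian binomial coefficient is $\left[{n\atop k}\right]_q=\prod_{i=0}^{k-1}\frac{q^n-q^i}{q^k-q^i}$; in particular $\left[{n\atop 1}\right]_q=\frac{q^n-1}{q-1}$. An $\alpha$-$(n,k,\delta)_q^c$ covering Grassmannian code is a subset $\mathcal{C}\subseteq\mathcal{G}_q(n,k)$ (no repeated codewords) such that every set of $\alpha$ distinct codewords of $\mathcal{C}$ spans a subspace of $\mathbb{F}_q^n$ of dimension at least $k+\delta$. $B_q(n,k,\delta;\alpha)$ denotes the maximum size of an $\alpha$-$(n,k,\delta)_q^c$ code. *)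

theory Defs
  imports "HOL-Analysis.Analysis"
begin

definition gauss_binom :: "nat \<Rightarrow> nat \<Rightarrow> nat \<Rightarrow> real" where
  "gauss_binom q n k = (\<Prod>i<k. (real q ^ n - real q ^ i) / (real q ^ k - real q ^ i))"

text \<open>The Grassmannian G_q(n,k): all k-dimensional subspaces of F^n, where F is the
  finite field 'a and n = CARD('n).\<close>
definition grassmannian :: "nat \<Rightarrow> ('a::field ^ 'n) set set" where
  "grassmannian k = {S. vec.subspace S \<and> vec.dim S = k}"

definition covering_code :: "nat \<Rightarrow> nat \<Rightarrow> nat \<Rightarrow> ('a::field ^ 'n) set set \<Rightarrow> bool" where
  "covering_code k \<delta> \<alpha> C \<longleftrightarrow>
     C \<subseteq> grassmannian k \<and>
     (\<forall>A \<subseteq> C. card A = \<alpha> \<longrightarrow> vec.dim (vec.span (\<Union>A)) \<ge> k + \<delta>)"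

definition B_max :: "('a::{field,finite}) itself \<Rightarrow> ('n::finite) itself \<Rightarrow> nat \<Rightarrow> nat \<Rightarrow> nat \<Rightarrow> nat" where
  "B_max _ _ k \<delta> \<alpha> =
     Max {card C | C :: ('a ^ 'n) set set. covering_code k \<delta> \<alpha> C}"

end

theory Submission
  imports Defs "HOL-Library.FuncSet"
begin


lemma card_span_indep:
  fixes B :: "('a::{field,finite}^'n) set"
  assumes ind: "vec.independent B"
  shows "card (vec.span B) = CARD('a) ^ card B"
proof -
  have fB: "finite B" using vec.finiteI_independent[OF ind] .
  let ?f = "\<lambda>u. \<Sum>v\<in>B. u v *s v"
  have inj: "inj_on ?f (B \<rightarrow>\<^sub>E UNIV)"
  proof (rule inj_onI)
    fix u w assume u: "u \<in> B \<rightarrow>\<^sub>E UNIV" and w: "w \<in> B \<rightarrow>\<^sub>E UNIV" and e: "?f u = ?f w"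
    have sub: "(\<Sum>v\<in>B. (u v - w v) *s v) = 0"
      using e by (simp add: vector_sub_rdistrib sum_subtractf)
    have cc: "\<forall>c. (\<Sum>v\<in>B. c v *s v) = 0 \<longrightarrow> (\<forall>v\<in>B. c v = 0)"
      using ind by (simp add: vec.independent_explicit)
    have "\<forall>v\<in>B. u v - w v = 0" using cc[THEN spec, of "\<lambda>v. u v - w v", THEN mp, OF sub] by simp
    then show "u = w" by (intro PiE_ext[OF u w]) simp
  qed
  have img: "?f ` (B \<rightarrow>\<^sub>E UNIV) = vec.span B"
  proof
    show "?f ` (B \<rightarrow>\<^sub>E UNIV) \<subseteq> vec.span B" using vec.span_finite[OF fB] by auto
  next
    show "vec.span B \<subseteq> ?f ` (B \<rightarrow>\<^sub>E UNIV)"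
    proof
      fix x assume "x \<in> vec.span B"
      then obtain u where x: "x = ?f u" using vec.span_finite[OF fB] by auto
      have m: "restrict u B \<in> B \<rightarrow>\<^sub>E UNIV" by auto
      have e: "?f (restrict u B) = x" using x by (auto intro: sum.cong)
      show "x \<in> ?f ` (B \<rightarrow>\<^sub>E UNIV)" using rev_image_eqI[where f="?f", OF m e[symmetric]] .
    qed
  qed
  have "card (vec.span B) = card (B \<rightarrow>\<^sub>E (UNIV::'a set))"
    using card_image[OF inj] unfolding img .
  also have "\<dots> = CARD('a) ^ card B" unfolding card_PiE[OF fB] by simp
  finally show ?thesis .
qed

lemma card_subspace:
  fixes S :: "('a::{field,finite}^'n) set"
  assumes "vec.subspace S"
  shows "card S = CARD('a) ^ vec.dim S"
proof -
  obtain B where B: "B \<subseteq> S" "S \<subseteq> vec.span B" "vec.independent B" "card B = vec.dim S"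
    using vec.basis_exists by blast
  have "vec.span B = S" using B assms vec.span_minimal by blast
  thus ?thesis using card_span_indep[OF B(3)] B(4) by simp
qed

lemma dim_join:
  fixes X W Z :: "('a::field^'n) set"
  assumes "vec.subspace X" "vec.subspace W" "Z \<subseteq> X \<inter> W"
  shows "vec.dim (vec.span (X \<union> W)) + vec.dim Z \<le> vec.dim X + vec.dim W"
proof -
  have sX: "vec.span X = X" by (rule vec.span_eq_iff[THEN iffD2, OF assms(1)])
  have sW: "vec.span W = W" by (rule vec.span_eq_iff[THEN iffD2, OF assms(2)])
  have "vec.span (X \<union> W) = {x + y |x y. x \<in> X \<and> y \<in> W}"
    using vec.span_Un[of X W] unfolding sX sW .
  moreover have "vec.dim Z \<le> vec.dim (X \<inter> W)" using vec.dim_subset assms(3) .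
  ultimately show ?thesis using vec.dim_sums_Int[OF assms(1,2)] by simp
qed

lemma dim_family:
  fixes A :: "('a::field^'n) set set" and Z :: "('a^'n) set"
  assumes "finite A" "A \<noteq> {}" "\<And>U. U \<in> A \<Longrightarrow> vec.subspace U" "\<And>U. U \<in> A \<Longrightarrow> Z \<subseteq> U"
  shows "vec.dim (vec.span (\<Union>A)) + (card A - 1) * vec.dim Z \<le> (\<Sum>U\<in>A. vec.dim U)"
  using assms
proof (induction A rule: finite_ne_induct)
  case (singleton U)
  then show ?case by simp
next
  case (insert U F)
  let ?X = "vec.span (\<Union>F)"
  have sp: "vec.span (\<Union>(insert U F)) = vec.span (U \<union> ?X)"
    by (simp only: Union_insert vec.span_Un vec.span_span)
  obtain U' where U': "U' \<in> F" using insert.hyps(2) by blast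
  have "Z \<subseteq> U'" using insert.prems(2) U' by blast
  also have "U' \<subseteq> \<Union>F" using U' by blast
  also have "\<Union>F \<subseteq> ?X" by (rule vec.span_superset)
  finally have ZX: "Z \<subseteq> ?X" .
  have ZU: "Z \<subseteq> U" using insert.prems(2) by blast
  have DJ: "vec.dim (vec.span (U \<union> ?X)) + vec.dim Z \<le> vec.dim U + vec.dim ?X"
    by (rule dim_join) (use insert.prems(1) ZX ZU in auto)
  have IH: "vec.dim ?X + (card F - 1) * vec.dim Z \<le> (\<Sum>U\<in>F. vec.dim U)"
    using insert.IH insert.prems by blast
  have cF: "card F > 0" using insert.hyps(1,2) by (simp add: card_gt_0_iff)
  have e: "card F * vec.dim Z = (card F - 1) * vec.dim Z + vec.dim Z"
    using cF by (cases "card F") auto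
  have "card (insert U F) - 1 = card F" using insert.hyps by simp
  moreover have "(\<Sum>U\<in>insert U F. vec.dim U) = vec.dim U + (\<Sum>U\<in>F. vec.dim U)"
    using insert.hyps by simp
  ultimately show ?case using sp DJ IH e by simp
qed

lemma card_filter_sum:
  assumes "finite A"
  shows "card {x\<in>A. P x} = (\<Sum>x\<in>A. if P x then 1 else (0::nat))"
  using assms by (simp add: sum.If_cases Int_def)

lemma swap_count:
  fixes C :: "'b set set"
  assumes "finite C" "finite T"
  shows "(\<Sum>v\<in>T. card {U\<in>C. v \<in> U}) = (\<Sum>U\<in>C. card (T \<inter> U))"
proof -
  have "(\<Sum>v\<in>T. card {U\<in>C. v \<in> U}) = (\<Sum>v\<in>T. \<Sum>U\<in>C. if v \<in> U then 1 else (0::nat))"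
    using assms(1) by (simp add: card_filter_sum)
  also have "\<dots> = (\<Sum>U\<in>C. \<Sum>v\<in>T. if v \<in> U then 1 else (0::nat))"
    by (rule sum.swap)
  also have "\<dots> = (\<Sum>U\<in>C. card {v\<in>T. v \<in> U})"
    using assms(2) by (simp add: card_filter_sum)
  also have "\<dots> = (\<Sum>U\<in>C. card (T \<inter> U))"
    by (simp add: Int_def)
  finally show ?thesis .
qed

lemma field_card_ge2: "CARD('a::{field,finite}) \<ge> 2"
proof -
  have "card {0::'a, 1} = 2" by simp
  moreover have "card {0::'a, 1} \<le> CARD('a)" by (rule card_mono) auto
  ultimately show ?thesis by simp
qed



lemma code_bound:
  fixes C :: "('a::{field,finite}^'n::finite) set set"
  assumes cc: "covering_code k \<delta> \<alpha> C"
    and k0: "0 < k" and a3: "3 \<le> \<alpha>"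
    and aq: "real \<alpha> * (real CARD('a) - 1) \<le> real CARD('a) ^ k - 1"
    and dl: "\<delta> \<ge> (\<alpha> - 1) * (k - 1) + 1" and kn: "k \<le> CARD('n)"
  shows "real (card C) * (real CARD('a) ^ k + real CARD('a) - 2)
           \<le> (real \<alpha> - 1) * (real CARD('a) ^ CARD('n) - 1)"
proof -
  define q where "q = CARD('a)"
  define n where "n = CARD('n)"
  have q2: "q \<ge> 2" unfolding q_def by (rule field_card_ge2)
  have q2r: "real q \<ge> 2" using q2 by simp
  have CG: "C \<subseteq> grassmannian k"
    and cov: "\<And>A. A \<subseteq> C \<Longrightarrow> card A = \<alpha> \<Longrightarrow> k + \<delta> \<le> vec.dim (vec.span (\<Union>A))"
    using cc unfolding covering_code_def by auto
  have sub: "\<And>U. U \<in> C \<Longrightarrow> vec.subspace U" and dimU: "\<And>U. U \<in> C \<Longrightarrow> vec.dim U = k"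
    using CG unfolding grassmannian_def by auto
  have fC: "finite C" by (rule finite_subset[OF subset_UNIV]) simp
  have e1: "(\<alpha> - 1) * (k - 1) + k + \<alpha> = \<alpha> * k + 1"
    using k0 a3 by (cases \<alpha>; cases k) (auto simp: algebra_simps)
  have key: "k + \<delta> + \<alpha> \<ge> \<alpha> * k + 2" using e1 dl by linarith
  have qk1: "real q ^ k \<ge> 1" using q2r by simp
  have n1: "n \<ge> 1" using k0 kn n_def by simp
  show ?thesis
  proof (cases "card C < \<alpha>")
    case True
    hence ca: "real (card C) \<le> real \<alpha> - 1" by linarith
    show ?thesis
    proof (cases "k < n")
      case True
      have "real q ^ n \<ge> real q ^ (k + 1)"
        using True q2r by (intro power_increasing) auto
      moreover have "(real q ^ k - 1) * (real q - 1) \<ge> 0" using qk1 q2r by simp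
      ultimately have X: "real q ^ k + real q - 2 \<le> real q ^ n - 1"
        by (simp add: algebra_simps)
      have X0: "real q ^ k + real q - 2 \<ge> 0" using qk1 q2r by linarith
      have "real (card C) * (real q ^ k + real q - 2) \<le> (real \<alpha> - 1) * (real q ^ k + real q - 2)"
        by (rule mult_right_mono[OF ca X0])
      also have "\<dots> \<le> (real \<alpha> - 1) * (real q ^ n - 1)"
        by (rule mult_left_mono[OF X]) (use a3 in simp)
      finally show ?thesis unfolding q_def n_def .
    next
      case False
      hence kn': "k = n" using kn n_def by simp
      have "C \<subseteq> {UNIV}"
      proof
        fix U assume U: "U \<in> C"
        have "vec.span U = vec.span UNIV"
          by (rule vec.dim_eq_span) (use dimU[OF U] kn' n_def in \<open>auto simp: card_cart_basis\<close>)
        hence "U = UNIV" using sub[OF U] vec.span_eq_iff vec.span_UNIV by metis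
        thus "U \<in> {UNIV}" by simp
      qed
      hence c1: "card C \<le> 1" using card_mono[of "{UNIV}" C] by simp
      have qn: "real q \<le> real q ^ n" using q2r n1
        by (metis One_nat_def power_increasing power_one_right order_trans one_le_numeral q2r)
      have X0: "real q ^ k + real q - 2 \<ge> 0" using qk1 q2r by linarith
      have "real (card C) * (real q ^ k + real q - 2) \<le> 1 * (real q ^ k + real q - 2)"
        by (rule mult_right_mono) (use c1 X0 in auto)
      also have "\<dots> \<le> 2 * (real q ^ n - 1)" using kn' qn by simp
      also have "\<dots> \<le> (real \<alpha> - 1) * (real q ^ n - 1)"
        by (rule mult_right_mono) (use a3 qn q2r in auto)
      finally show ?thesis unfolding q_def n_def .
    qed
  next
    case False
    hence ca: "\<alpha> \<le> card C" by simp
    define m where "m v = card {U\<in>C. v \<in> U}" for v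
    define N :: "('a^'n) set" where "N = UNIV - {0}"
    define F where "F = {v\<in>N. m v = \<alpha> - 1}"
    have mle: "m v \<le> \<alpha> - 1" if vne: "v \<noteq> 0" for v
    proof (rule ccontr)
      assume "\<not> m v \<le> \<alpha> - 1"
      hence "\<alpha> \<le> card {U\<in>C. v \<in> U}" unfolding m_def by simp
      then obtain A where A: "A \<subseteq> {U\<in>C. v \<in> U}" "card A = \<alpha>" "finite A"
        by (meson obtain_subset_with_card_n)
      have AC: "A \<subseteq> C" using A by auto
      have c1: "k + \<delta> \<le> vec.dim (vec.span (\<Union>A))" using cov[OF AC A(2)] .
      have Ane: "A \<noteq> {}" using A(2) a3 by auto
      have DF: "vec.dim (vec.span (\<Union>A)) + (card A - 1) * vec.dim (vec.span {v}) \<le> (\<Sum>U\<in>A. vec.dim U)"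
      proof (rule dim_family[OF A(3) Ane])
        fix U assume "U \<in> A"
        then have "U \<in> C" "v \<in> U" using A by auto
        then show "vec.subspace U" "vec.span {v} \<subseteq> U"
          using sub vec.span_minimal[of "{v}" U] by auto
      qed
      have "(\<Sum>U\<in>A. vec.dim U) = \<alpha> * k" using A AC dimU by (simp add: subset_iff)
      moreover have "vec.dim (vec.span {v}) = 1" using vne by simp
      ultimately show False using DF c1 key A(2) by simp
    qed
    have KS: "(\<alpha> - 2) * vec.dim Z + vec.dim Y \<le> \<alpha> - 2"
      if S: "S \<subseteq> C" "card S = \<alpha> - 1" and W: "W \<in> C" "W \<notin> S"
        and Z: "\<And>U. U \<in> S \<Longrightarrow> Z \<subseteq> U" and Y: "Y \<subseteq> vec.span (\<Union>S)" "Y \<subseteq> W" for S W Z Y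
    proof -
      have fS: "finite S" using S fC finite_subset by blast
      have Sne: "S \<noteq> {}" using S a3 by auto
      let ?X = "vec.span (\<Union>S)"
      have DF: "vec.dim ?X + (card S - 1) * vec.dim Z \<le> (\<Sum>U\<in>S. vec.dim U)"
        by (rule dim_family[OF fS Sne]) (use S sub Z in auto)
      have sS: "(\<Sum>U\<in>S. vec.dim U) = (\<alpha> - 1) * k" using S dimU by (simp add: subset_iff)
      have cS: "card S - 1 = \<alpha> - 2" using S by simp
      have DJ: "vec.dim (vec.span (?X \<union> W)) + vec.dim Y \<le> vec.dim ?X + vec.dim W"
        by (rule dim_join) (use sub W Y in auto)
      have "vec.span (?X \<union> W) = vec.span (W \<union> ?X)" by (simp add: Un_commute)
      also have "\<dots> = vec.span (W \<union> \<Union>S)" by (simp only: vec.span_Un vec.span_span)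
      also have "\<dots> = vec.span (\<Union>(insert W S))" by simp
      finally have sp: "vec.span (?X \<union> W) = vec.span (\<Union>(insert W S))" .
      have cI: "card (insert W S) = \<alpha>" using S W fS a3 by simp
      have c1: "k + \<delta> \<le> vec.dim (vec.span (\<Union>(insert W S)))"
        using cov[OF _ cI] S W by auto
      have e2: "(\<alpha> - 1) * k + k = \<alpha> * k" using a3 by (cases \<alpha>) auto
      show ?thesis using DF sS cS DJ sp c1 dimU[OF W(1)] e2 key by simp
    qed
    have fN: "finite N" by simp
    have FN: "F \<subseteq> N" unfolding F_def by auto
    have Sfin: "finite {U\<in>C. v \<in> U}" for v using fC by simp
    have Fcard: "card (F \<inter> U) \<le> q - 1" if U: "U \<in> C" for U
    proof (cases "F \<inter> U = {}")
      case True thus ?thesis by simp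
    next
      case False
      then obtain v where v: "v \<in> F" "v \<in> U" by blast
      have vne: "v \<noteq> 0" and mv: "m v = \<alpha> - 1" using v FN unfolding F_def N_def by auto
      have incl: "F \<inter> U \<subseteq> vec.span {v} - {0}"
      proof
        fix w assume w: "w \<in> F \<inter> U"
        have wne: "w \<noteq> 0" and mw: "m w = \<alpha> - 1" using w FN unfolding F_def N_def by auto
        have "w \<in> vec.span {v}"
        proof (rule ccontr)
          assume wv: "w \<notin> vec.span {v}"
          define Sv where "Sv = {U\<in>C. v \<in> U}"
          define Sw where "Sw = {U\<in>C. w \<in> U}"
          have cSv: "card Sv = \<alpha> - 1" using mv unfolding m_def Sv_def .
          have cSw: "card Sw = \<alpha> - 1" using mw unfolding m_def Sw_def .
          have SvC: "Sv \<subseteq> C" and SwC: "Sw \<subseteq> C" unfolding Sv_def Sw_def by auto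
          have USv: "U \<in> Sv" and USw: "U \<in> Sw" using U v w unfolding Sv_def Sw_def by auto
          have fSv: "finite Sv" using SvC fC finite_subset by blast
          have fSw: "finite Sw" using SwC fC finite_subset by blast
          show False
          proof (cases "Sv = Sw")
            case True
            have "\<not> C \<subseteq> Sv"
            proof
              assume "C \<subseteq> Sv"
              hence "card C \<le> card Sv" by (rule card_mono[OF fSv])
              thus False using cSv ca a3 by linarith
            qed
            then obtain W where W: "W \<in> C" "W \<notin> Sv" by blast
            have ind: "vec.independent {w, v}"
              using wv vne by (auto simp: vec.independent_insert vec.span_base)
            have wnv: "w \<noteq> v" using wv vec.span_base[of v "{v}"] by auto
            have d2: "vec.dim (vec.span {w, v}) = 2"
              using vec.dim_span_eq_card_independent[OF ind] wnv by simp
            have "(\<alpha> - 2) * vec.dim (vec.span {w, v}) + vec.dim ({} :: ('a^'n) set) \<le> \<alpha> - 2"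
            proof (rule KS[OF SvC cSv W])
              fix U' assume "U' \<in> Sv"
              then have "U' \<in> C" "v \<in> U'" "w \<in> U'" using True unfolding Sv_def Sw_def by auto
              then show "vec.span {w, v} \<subseteq> U'" using sub vec.span_minimal[of "{w,v}" U'] by auto
            qed auto
            then show False using d2 a3 by simp
          next
            case False
            have "\<not> Sw \<subseteq> Sv"
            proof
              assume "Sw \<subseteq> Sv"
              hence "Sw = Sv" by (rule card_subset_eq[OF fSv]) (use cSv cSw in simp)
              thus False using False by simp
            qed
            then obtain W where W: "W \<in> Sw" "W \<notin> Sv" by blast
            have WC: "W \<in> C" and wW: "w \<in> W" using W unfolding Sw_def by auto
            have "(\<alpha> - 2) * vec.dim (vec.span {v}) + vec.dim (vec.span {w}) \<le> \<alpha> - 2"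
            proof (rule KS[OF SvC cSv WC W(2)])
              fix U' assume "U' \<in> Sv"
              then have "U' \<in> C" "v \<in> U'" unfolding Sv_def by auto
              then show "vec.span {v} \<subseteq> U'" using sub vec.span_minimal[of "{v}" U'] by auto
            next
              have "{w} \<subseteq> \<Union>Sv" using USv w by auto
              then show "vec.span {w} \<subseteq> vec.span (\<Union>Sv)" by (rule vec.span_mono)
            next
              show "vec.span {w} \<subseteq> W" using sub[OF WC] wW vec.span_minimal[of "{w}" W] by auto
            qed
            then show False using vne wne by simp
          qed
        qed
        then show "w \<in> vec.span {v} - {0}" using wne by simp
      qed
      have indv: "vec.independent {v}" using vne by (simp add: vec.independent_insert)
      have "card (vec.span {v}) = q" using card_span_indep[OF indv] unfolding q_def by simp
      hence "card (vec.span {v} - {0}) = q - 1" by (simp add: vec.span_zero)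
      moreover have "card (F \<inter> U) \<le> card (vec.span {v} - {0})"
        by (rule card_mono[OF _ incl]) simp
      ultimately show ?thesis by simp
    qed
    have S1: "(\<Sum>v\<in>N. m v) = card C * (q ^ k - 1)"
    proof -
      have "(\<Sum>v\<in>N. m v) = (\<Sum>U\<in>C. card (N \<inter> U))" unfolding m_def by (rule swap_count[OF fC fN])
      also have "\<dots> = (\<Sum>U\<in>C. q ^ k - 1)"
      proof (rule sum.cong)
        fix U assume U: "U \<in> C"
        have "N \<inter> U = U - {0}" unfolding N_def by auto
        moreover have "0 \<in> U" using sub[OF U] by (rule vec.subspace_0)
        moreover have "card U = q ^ k" using card_subspace[OF sub[OF U]] dimU[OF U] unfolding q_def by simp
        ultimately show "card (N \<inter> U) = q ^ k - 1" by simp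
      qed simp
      finally show ?thesis by simp
    qed
    have S2: "(\<alpha> - 1) * card F \<le> card C * (q - 1)"
    proof -
      have fF: "finite F" by simp
      have "(\<alpha> - 1) * card F = (\<Sum>v\<in>F. m v)" unfolding F_def by simp
      also have "\<dots> = (\<Sum>U\<in>C. card (F \<inter> U))" unfolding m_def by (rule swap_count[OF fC fF])
      also have "\<dots> \<le> (\<Sum>U\<in>C. q - 1)" by (rule sum_mono) (rule Fcard)
      finally show ?thesis by simp
    qed
    have cN: "card N = q ^ n - 1" unfolding N_def q_def n_def by (simp add: card_Diff_singleton)
    have pv: "real (m v) \<le> (real \<alpha> - 2) * (real \<alpha> - 1 - real (m v)) + (if v \<in> F then real \<alpha> - 1 else 0)"
      if vN: "v \<in> N" for v
    proof (cases "v \<in> F")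
      case True
      hence "m v = \<alpha> - 1" unfolding F_def by simp
      hence "real (m v) = real \<alpha> - 1" using a3 by simp
      thus ?thesis using True by simp
    next
      case False
      have "m v \<le> \<alpha> - 1" using mle vN unfolding N_def by simp
      moreover have "m v \<noteq> \<alpha> - 1" using False vN unfolding F_def by simp
      ultimately have "m v \<le> \<alpha> - 2" by simp
      hence r: "real (m v) \<le> real \<alpha> - 2" using a3 by linarith
      have "(real \<alpha> - 2) * 1 \<le> (real \<alpha> - 2) * (real \<alpha> - 1 - real (m v))"
        by (rule mult_left_mono) (use r a3 in auto)
      thus ?thesis using False r by simp
    qed
    have IF: "(\<Sum>v\<in>N. if v \<in> F then real \<alpha> - 1 else 0) = (real \<alpha> - 1) * real (card F)"
      using sum.inter_restrict[OF fN, of "\<lambda>_. real \<alpha> - 1" F] FN by (simp add: Int_absorb1 mult.commute)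
    have "(\<Sum>v\<in>N. real (m v)) \<le> (\<Sum>v\<in>N. (real \<alpha> - 2) * (real \<alpha> - 1 - real (m v)) + (if v \<in> F then real \<alpha> - 1 else 0))"
      by (rule sum_mono) (rule pv)
    also have "\<dots> = (real \<alpha> - 2) * ((real \<alpha> - 1) * real (card N) - (\<Sum>v\<in>N. real (m v))) + (real \<alpha> - 1) * real (card F)"
      by (simp add: sum.distrib IF sum_subtractf flip: sum_distrib_left)
    finally have ineq: "(\<Sum>v\<in>N. real (m v)) \<le> (real \<alpha> - 2) * ((real \<alpha> - 1) * real (card N) - (\<Sum>v\<in>N. real (m v))) + (real \<alpha> - 1) * real (card F)" .
    define c where "c = real (card C)"
    define Q where "Q = real q"
    have qk: "q ^ k \<ge> 1" using q2 by simp
    have qn: "q ^ n \<ge> 1" using q2 by simp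
    have Sm: "(\<Sum>v\<in>N. real (m v)) = c * (Q ^ k - 1)"
      unfolding c_def Q_def using S1 qk by (simp flip: of_nat_sum add: of_nat_diff)
    have rN: "real (card N) = Q ^ n - 1" unfolding Q_def using cN qn by (simp add: of_nat_diff)
    have rF: "(real \<alpha> - 1) * real (card F) \<le> c * (Q - 1)"
    proof -
      have "real ((\<alpha> - 1) * card F) \<le> real (card C * (q - 1))" using S2 by (simp only: of_nat_le_iff)
      thus ?thesis unfolding c_def Q_def using a3 q2 by (simp add: of_nat_diff)
    qed
    have c0: "c \<ge> 0" unfolding c_def by simp
    have Q2: "Q \<ge> 2" unfolding Q_def using q2r .
    have aqQ: "real \<alpha> * (Q - 1) \<le> Q ^ k - 1" using aq unfolding Q_def q_def .
    have lin: "(real \<alpha> - 2) * (Q - 1) \<le> Q ^ k - Q" using aqQ Q2 by (simp add: algebra_simps)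
    have "c * ((real \<alpha> - 2) * (Q - 1)) \<le> c * (Q ^ k - Q)" by (rule mult_left_mono[OF lin c0])
    hence "(real \<alpha> - 2) * ((real \<alpha> - 1) * (Q ^ n - 1) - c * (Q ^ k - 1) - c * (Q - 1)) \<ge> 0"
      using ineq unfolding Sm rN using rF by (simp add: algebra_simps)
    moreover have "real \<alpha> - 2 > 0" using a3 by simp
    ultimately have "(real \<alpha> - 1) * (Q ^ n - 1) - c * (Q ^ k - 1) - c * (Q - 1) \<ge> 0"
      by (simp add: zero_le_mult_iff)
    hence "c * (Q ^ k + Q - 2) \<le> (real \<alpha> - 1) * (Q ^ n - 1)" by (simp add: algebra_simps)
    thus ?thesis unfolding c_def Q_def q_def n_def .
  qed
qed



lemma gauss1_aux: "gauss_binom q n 1 = (real q ^ n - 1) / (real q - 1)"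
  unfolding gauss_binom_def by simp

theorem mainTheorem5:
  fixes q n k \<delta> \<alpha> :: nat
  assumes "CARD('a::{field,finite}) = q"
    and "CARD('n::finite) = n"
    and "0 < k" and "0 < \<delta>" and "0 < \<alpha>" and "k \<le> n"
    and "3 \<le> \<alpha>" and "real \<alpha> \<le> gauss_binom q k 1"
    and "\<delta> \<ge> (\<alpha> - 1) * (k - 1) + 1"
  shows "real (B_max TYPE('a) TYPE('n) k \<delta> \<alpha>)
           \<le> (real \<alpha> - 1) * gauss_binom q n 1 / (gauss_binom q k 1 + 1)"
proof -
  let ?S = "{card C | C :: ('a ^ 'n) set set. covering_code k \<delta> \<alpha> C}"
  have q2: "real q \<ge> 2" using field_card_ge2[where 'a='a] assms(1) by simp
  have fin: "finite ?S"
  proof -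
    have "?S \<subseteq> card ` (UNIV :: ('a ^ 'n) set set set)" by auto
    thus ?thesis by (rule finite_subset) simp
  qed
  have "covering_code k \<delta> \<alpha> ({} :: ('a ^ 'n) set set)"
    unfolding covering_code_def using assms(7) by auto
  hence ne: "?S \<noteq> {}" by blast
  have "B_max TYPE('a) TYPE('n) k \<delta> \<alpha> \<in> ?S"
    unfolding B_max_def using Max_in[OF fin ne] .
  then obtain C :: "('a ^ 'n) set set" where C: "covering_code k \<delta> \<alpha> C"
    and BC: "B_max TYPE('a) TYPE('n) k \<delta> \<alpha> = card C" by auto
  have aq0: "real \<alpha> \<le> (real q ^ k - 1) / (real q - 1)" using assms(8) gauss1_aux by simp
  have aq: "real \<alpha> * (real CARD('a) - 1) \<le> real CARD('a) ^ k - 1"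
    using aq0 q2 assms(1) by (simp add: le_divide_eq)
  have cb: "real (card C) * (real q ^ k + real q - 2) \<le> (real \<alpha> - 1) * (real q ^ n - 1)"
    using code_bound[OF C assms(3) assms(7) aq assms(9)] assms(1,2,6) by simp
  have qk: "real q ^ k \<ge> 1" using q2 by simp
  have pos: "real q ^ k + real q - 2 > 0" using qk q2 by linarith
  have "(real \<alpha> - 1) * gauss_binom q n 1 / (gauss_binom q k 1 + 1)
        = (real \<alpha> - 1) * (real q ^ n - 1) / (real q ^ k + real q - 2)"
  proof -
    have d: "(real q ^ k - 1) / (real q - 1) + 1 = (real q ^ k + real q - 2) / (real q - 1)"
      using q2 by (simp add: field_simps)
    have "(real \<alpha> - 1) * ((real q ^ n - 1) / (real q - 1)) = ((real \<alpha> - 1) * (real q ^ n - 1)) / (real q - 1)"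
      by simp
    moreover have "\<And>X Y d::real. d \<noteq> 0 \<Longrightarrow> (X / d) / (Y / d) = X / Y"
      by simp
    ultimately show ?thesis unfolding gauss1_aux d using q2 by simp
  qed
  moreover have "real (card C) \<le> (real \<alpha> - 1) * (real q ^ n - 1) / (real q ^ k + real q - 2)"
    using cb pos by (simp add: pos_le_divide_eq)
  ultimately show ?thesis using BC by simp
qed

end
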